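(* Let $m\ge1$ and $n\in\mathbb{Z}$. Suppose the boxes $b_0,\ldots,b_{m-1}$ are independent integer variables, each $b_i$ ranging over the whole integer interval $\{u_i,\ldots,v_i\}$, with $\sum_i u_i\le n\le\sum_i v_i$. Then there is no integer sequence $T=(t_0,\ldots,t_{m-1})$ with $\sum_i t_i<n-m+1$ such that for every admissible $B$ with $\sum_i b_i\le n$ and every $l\in\{1,\ldots,m\}$ there exists $i$ with $\sum_{j=i}^{i+l'-1}b_j\le l'-1+\sum_{j=i}^{i+l'-1}t_j$ for all $l'\in\{1,\ldots,l\}$.
   Context: Indices are taken modulo $m$ (ring arrangement). *)

theory Defs
  imports Main
begin

definition cyc_sum :: "nat \<Rightarrow> (nat \<Rightarrow> int) \<Rightarrow> nat \<Rightarrow> nat \<Rightarrow> int" where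
  "cyc_sum m x i l = (\<Sum>j = i..<i + l. x (j mod m))"

end

theory Submission
  imports Defs
begin

lemma exists_box_sum:
  fixes u v :: "nat \<Rightarrow> int"
  shows "\<forall>i<m. u i \<le> v i \<Longrightarrow> (\<Sum>i<m. u i) \<le> n \<Longrightarrow> n \<le> (\<Sum>i<m. v i) \<Longrightarrow>
    \<exists>b. (\<forall>i<m. u i \<le> b i \<and> b i \<le> v i) \<and> (\<Sum>i<m. b i) = n"
proof (induction m arbitrary: n)
  case 0
  then show ?case by auto
next
  case (Suc m)
  define c where "c = max (u m) (n - (\<Sum>i<m. v i))"
  have c1: "u m \<le> c" "c \<le> v m" using Suc.prems by (auto simp: c_def)
  have "(\<Sum>i<m. u i) \<le> n - c" "n - c \<le> (\<Sum>i<m. v i)"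
    using Suc.prems sum_mono[of "{..<m}" u v] by (auto simp: c_def max_def)
  then obtain b where b: "\<forall>i<m. u i \<le> b i \<and> b i \<le> v i" "(\<Sum>i<m. b i) = n - c"
  proof -
    have "\<forall>i<m. u i \<le> v i" using Suc.prems(1) by auto
    then show ?thesis using Suc.IH that \<open>(\<Sum>i<m. u i) \<le> n - c\<close> \<open>n - c \<le> (\<Sum>i<m. v i)\<close> by blast
  qed
  have "(\<Sum>i<m. (b(m:=c)) i) = (\<Sum>i<m. b i)" by (rule sum.cong) auto
  then show ?case using b c1
    by (intro exI[of _ "b(m:=c)"]) (auto simp: less_Suc_eq)
qed

lemma cyc_full:
  assumes "m \<ge> 1"
  shows "cyc_sum m x i m = (\<Sum>j<m. x j)"
proof (induction i)
  case 0
  have "(\<Sum>j = 0..<m. x (j mod m)) = (\<Sum>j = 0..<m. x j)" by (rule sum.cong) auto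
  then show ?case by (simp add: cyc_sum_def lessThan_atLeast0)
next
  case (Suc i)
  have a: "(\<Sum>j = i..<Suc (i + m). x (j mod m)) = (\<Sum>j = i..<i + m. x (j mod m)) + x ((i+m) mod m)"
    by simp
  have b: "(\<Sum>j = i..<Suc (i + m). x (j mod m)) = x (i mod m) + (\<Sum>j = Suc i..<Suc (i + m). x (j mod m))"
    by (subst sum.atLeast_Suc_lessThan) auto
  have "(i+m) mod m = i mod m" by simp
  then show ?case using Suc a b by (simp add: cyc_sum_def)
qed

theorem mainTheorem8:
  fixes m :: nat and n :: int and u v :: "nat \<Rightarrow> int"
  assumes "m \<ge> 1"
    and "\<forall>i<m. u i \<le> v i"
    and "(\<Sum>i<m. u i) \<le> n" and "n \<le> (\<Sum>i<m. v i)"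
  shows "\<not> (\<exists>t :: nat \<Rightarrow> int. (\<Sum>i<m. t i) < n - int m + 1 \<and>
           (\<forall>b :: nat \<Rightarrow> int. (\<forall>i<m. u i \<le> b i \<and> b i \<le> v i) \<and> (\<Sum>i<m. b i) \<le> n \<longrightarrow>
              (\<forall>l\<in>{1..m}. \<exists>i<m. \<forall>l'\<in>{1..l}.
                 cyc_sum m b i l' \<le> int l' - 1 + cyc_sum m t i l')))"
proof
  assume "\<exists>t :: nat \<Rightarrow> int. (\<Sum>i<m. t i) < n - int m + 1 \<and>
           (\<forall>b :: nat \<Rightarrow> int. (\<forall>i<m. u i \<le> b i \<and> b i \<le> v i) \<and> (\<Sum>i<m. b i) \<le> n \<longrightarrow>
              (\<forall>l\<in>{1..m}. \<exists>i<m. \<forall>l'\<in>{1..l}.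
                 cyc_sum m b i l' \<le> int l' - 1 + cyc_sum m t i l'))"
  then obtain t where t1: "(\<Sum>i<m. t i) < n - int m + 1" and
    t2: "\<forall>b :: nat \<Rightarrow> int. (\<forall>i<m. u i \<le> b i \<and> b i \<le> v i) \<and> (\<Sum>i<m. b i) \<le> n \<longrightarrow>
              (\<forall>l\<in>{1..m}. \<exists>i<m. \<forall>l'\<in>{1..l}.
                 cyc_sum m b i l' \<le> int l' - 1 + cyc_sum m t i l')" by blast
  obtain b where b: "\<forall>i<m. u i \<le> b i \<and> b i \<le> v i" "(\<Sum>i<m. b i) = n"
    using exists_box_sum assms by blast
  have "m \<in> {1..m}" using assms by auto
  then obtain i where "i < m" "\<forall>l'\<in>{1..m}. cyc_sum m b i l' \<le> int l' - 1 + cyc_sum m t i l'"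
    using t2 b by (metis order_refl)
  then have "cyc_sum m b i m \<le> int m - 1 + cyc_sum m t i m" using assms by auto
  then show False using cyc_full[OF assms(1)] b t1 by simp
qed

end
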